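(* Let $L$ be a countable C-lattice domain in which every element is a join of principal elements. If $L$ is pseudo-Dedekind and Prüfer, then $L$ has finite character.
   Context: A multiplicative lattice is a complete lattice $(L,\le)$ with bottom $0$ and top $1$ which is also a commutative monoid with identity $1$ such that $a(\bigvee_\alpha b_\alpha)=\bigvee_\alpha(ab_\alpha)$ for all $a,b_\alpha\in L$. For $x,y\in L$, $(y:x)=\bigvee\{a\in L: ax\le y\}$. An element $c$ is compact if $c\le\bigvee S$ implies $c\le\bigvee T$ for some finite $T\subseteq S$. A C-lattice is a multiplicative lattice in which $1$ is compact, the product of two compact elements is compact, and every element is a join of compact elements. A proper element $p\ne1$ is prime if $xy\le p$ implies $x\le p$ or $y\le p$; maximal elements are maximal in $L\setminus\{1\}$; $L$ is a domain if $0$ is prime. An element $x$ is principal if $y\wedge zx=((y:x)\wedge z)x$ and $y\vee(z:x)=((yx\vee z):x)$ for all $y,z\in L$. $L$ is pseudo-Dedekind if $(x:a)$ is principal whenever $x,a\in L$ and $x$ is principal; $L$ is Prüfer if every compact element is principal; $L$ has finite character if every nonzero element is below only finitely many maximal elements. *)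

theory Defs
  imports Main "HOL-Library.Countable_Set"
begin

text \<open>A multiplicative lattice: the ambient type is a complete lattice (bottom 0 = bot,
top 1 = top) and mult is a commutative monoid operation with identity top that
distributes over arbitrary joins.\<close>

definition mult_lattice :: "('a::complete_lattice \<Rightarrow> 'a \<Rightarrow> 'a) \<Rightarrow> bool" where
  "mult_lattice mult \<longleftrightarrow>
     (\<forall>a b c. mult (mult a b) c = mult a (mult b c)) \<and>
     (\<forall>a b. mult a b = mult b a) \<and>
     (\<forall>a. mult a top = a) \<and>
     (\<forall>a B. mult a (Sup B) = Sup (mult a ` B))"

definition res :: "('a::complete_lattice \<Rightarrow> 'a \<Rightarrow> 'a) \<Rightarrow> 'a \<Rightarrow> 'a \<Rightarrow> 'a" where
  "res mult y x = Sup {a. mult a x \<le> y}"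

definition lat_compact :: "'a::complete_lattice \<Rightarrow> bool" where
  "lat_compact c \<longleftrightarrow> (\<forall>S. c \<le> Sup S \<longrightarrow> (\<exists>T. T \<subseteq> S \<and> finite T \<and> c \<le> Sup T))"

definition C_lattice :: "('a::complete_lattice \<Rightarrow> 'a \<Rightarrow> 'a) \<Rightarrow> bool" where
  "C_lattice mult \<longleftrightarrow> mult_lattice mult \<and> lat_compact (top::'a) \<and>
     (\<forall>a b. lat_compact a \<and> lat_compact b \<longrightarrow> lat_compact (mult a b)) \<and>
     (\<forall>x::'a. \<exists>S. (\<forall>s\<in>S. lat_compact s) \<and> x = Sup S)"

definition lat_prime :: "('a::complete_lattice \<Rightarrow> 'a \<Rightarrow> 'a) \<Rightarrow> 'a \<Rightarrow> bool" where
  "lat_prime mult p \<longleftrightarrow> p \<noteq> top \<and> (\<forall>x y. mult x y \<le> p \<longrightarrow> x \<le> p \<or> y \<le> p)"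

definition lat_maximal :: "'a::complete_lattice \<Rightarrow> bool" where
  "lat_maximal m \<longleftrightarrow> m \<noteq> top \<and> (\<forall>x. m \<le> x \<and> x \<noteq> top \<longrightarrow> x = m)"

definition lat_domain :: "('a::complete_lattice \<Rightarrow> 'a \<Rightarrow> 'a) \<Rightarrow> bool" where
  "lat_domain mult \<longleftrightarrow> lat_prime mult bot"

definition lat_principal :: "('a::complete_lattice \<Rightarrow> 'a \<Rightarrow> 'a) \<Rightarrow> 'a \<Rightarrow> bool" where
  "lat_principal mult x \<longleftrightarrow>
     (\<forall>y z. inf y (mult z x) = mult (inf (res mult y x) z) x \<and>
            sup y (res mult z x) = res mult (sup (mult y x) z) x)"

definition pseudo_Dedekind :: "('a::complete_lattice \<Rightarrow> 'a \<Rightarrow> 'a) \<Rightarrow> bool" where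
  "pseudo_Dedekind mult \<longleftrightarrow>
     (\<forall>x a. lat_principal mult x \<longrightarrow> lat_principal mult (res mult x a))"

definition Pruefer :: "('a::complete_lattice \<Rightarrow> 'a \<Rightarrow> 'a) \<Rightarrow> bool" where
  "Pruefer mult \<longleftrightarrow> (\<forall>c. lat_compact c \<longrightarrow> lat_principal mult c)"

definition finite_character :: "'a::complete_lattice itself \<Rightarrow> bool" where
  "finite_character _ \<longleftrightarrow> (\<forall>x::'a. x \<noteq> bot \<longrightarrow> finite {m. lat_maximal m \<and> x \<le> m})"

end

theory Submission
  imports Defs
begin

lemma no_inj_nat_set:
  assumes "countable (UNIV :: 'a set)"
  shows "\<not> inj (h :: nat set \<Rightarrow> 'a)"
proof
  assume ih: "inj h"
  obtain g :: "'a \<Rightarrow> nat" where g: "inj g" using assms unfolding countable_def by blast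
  have "inj (g \<circ> h)" using g ih by (rule inj_compose)
  then have "surj (inv (g \<circ> h))" by (rule inj_imp_surj_inv)
  then have "range (inv (g \<circ> h)) = Pow (UNIV :: nat set)" by simp
  then show False using Cantors_theorem[of "UNIV::nat set"] by blast
qed

lemma inj_from_test:
  assumes "\<forall>S k. (h S \<le> (\<phi> k :: 'a::order)) = (k \<notin> S)"
  shows "inj (h :: nat set \<Rightarrow> 'a)"
proof (rule injI)
  fix S S' assume e: "h S = h S'"
  have "(k \<notin> S) = (k \<notin> S')" for k
    using assms[rule_format, of S k] assms[rule_format, of S' k] e by simp
  then show "S = S'" by blast
qed

lemma greedy:
  fixes Y :: "'a set" and Q :: "'b \<Rightarrow> 'a \<Rightarrow> bool" and K :: "'b set"
  assumes Y: "infinite Y"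
  and step: "\<And>Z. Z \<subseteq> Y \<Longrightarrow> infinite Z \<Longrightarrow> \<exists>m\<in>Z. \<exists>s\<in>K. Q s m \<and> infinite {m'\<in>Z. \<not> Q s m'}"
  shows "\<exists>(mm::nat \<Rightarrow> 'a) ss. inj mm \<and> range mm \<subseteq> Y \<and> (\<forall>k. ss k \<in> K \<and> Q (ss k) (mm k))
            \<and> (\<forall>k j. k < j \<longrightarrow> \<not> Q (ss k) (mm j))"
proof -
  define P where "P Z ms \<longleftrightarrow> fst ms \<in> Z \<and> snd ms \<in> K \<and> Q (snd ms) (fst ms)
           \<and> infinite {m'\<in>Z. \<not> Q (snd ms) m'}" for Z ms
  define ch where "ch Z = (SOME ms. P Z ms)" for Z
  have ch: "P Z (ch Z)" if ZZ: "Z \<subseteq> Y" "infinite Z" for Z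
  proof -
    obtain m s where "m \<in> Z" "s \<in> K" "Q s m" "infinite {m'\<in>Z. \<not> Q s m'}" using step[OF ZZ] by blast
    then have "P Z (m, s)" by (simp add: P_def)
    then show ?thesis unfolding ch_def by (rule someI)
  qed
  define nx where "nx Z = {m'\<in>Z. \<not> Q (snd (ch Z)) m'}" for Z
  define Zs where "Zs k = (nx ^^ k) Y" for k
  have Zs: "Zs k \<subseteq> Y \<and> infinite (Zs k)" for k
  proof (induction k)
    case 0 then show ?case using Y by (simp add: Zs_def)
  next
    case (Suc k)
    have eq: "Zs (Suc k) = nx (Zs k)" by (simp add: Zs_def)
    have "P (Zs k) (ch (Zs k))" using Suc by (intro ch) auto
    then show ?case unfolding eq using Suc by (auto simp: nx_def P_def)
  qed
  have Zsuc: "Zs (Suc k) \<subseteq> Zs k" for k by (auto simp: Zs_def nx_def)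
  define mm where "mm k = fst (ch (Zs k))" for k
  define ss where "ss k = snd (ch (Zs k))" for k
  have mmZ: "mm k \<in> Zs k \<and> ss k \<in> K \<and> Q (ss k) (mm k)" for k
  proof -
    have "P (Zs k) (ch (Zs k))" using Zs[of k] by (intro ch) auto
    then show ?thesis by (simp add: P_def mm_def ss_def)
  qed
  have far: "\<not> Q (ss k) (mm j)" if "k < j" for k j
  proof -
    have "Zs j \<subseteq> Zs (Suc k)" using lift_Suc_antimono_le[of Zs, OF Zsuc] that by simp
    then have "mm j \<in> Zs (Suc k)" using mmZ by blast
    then show ?thesis by (simp add: Zs_def nx_def ss_def)
  qed
  have "inj mm"
  proof (rule injI)
    fix a b assume ab: "mm a = mm b"
    show "a = b"
    proof (rule ccontr)
      assume "a \<noteq> b"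
      then consider "a < b" | "b < a" by linarith
      then show False
      proof cases
        case 1 then show False using far[OF 1] mmZ[of a] ab by simp
      next
        case 2 then show False using far[OF 2] mmZ[of b] ab by simp
      qed
    qed
  qed
  moreover have "range mm \<subseteq> Y" using mmZ Zs by blast
  ultimately have "inj mm \<and> range mm \<subseteq> Y \<and> (\<forall>k. ss k \<in> K \<and> Q (ss k) (mm k))
            \<and> (\<forall>k j. k < j \<longrightarrow> \<not> Q (ss k) (mm j))" using mmZ far by blast
  then show ?thesis by blast
qed

locale mlat =
  fixes mult :: "'a::complete_lattice \<Rightarrow> 'a \<Rightarrow> 'a"
  assumes CL: "C_lattice mult" and DOM: "lat_domain mult"
begin

lemma MLt: "mult_lattice mult" using CL by (simp add: C_lattice_def)

lemma comm: "mult a b = mult b a" using MLt unfolding mult_lattice_def by blast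
lemma one[simp]: "mult a top = a" using MLt unfolding mult_lattice_def by blast
lemma one_left[simp]: "mult top a = a" using one comm by metis
lemma distr: "mult a (Sup B) = Sup (mult a ` B)" using MLt unfolding mult_lattice_def by blast

lemma mult_sup: "mult a (sup b c) = sup (mult a b) (mult a c)"
  using distr[of a "{b, c}"] by simp

lemma mono: "b \<le> c \<Longrightarrow> mult a b \<le> mult a c"
  by (metis mult_sup sup.absorb_iff2 sup.cobounded1)

lemma mono_left: "b \<le> c \<Longrightarrow> mult b a \<le> mult c a"
  using mono comm by metis

lemma mult_le_right: "mult a b \<le> b"
  using mono_left[of a top b] by simp

lemma mult_le_left: "mult a b \<le> a"
  using mult_le_right comm by metis

lemma le_res: "mult a x \<le> y \<Longrightarrow> a \<le> res mult y x"
  unfolding res_def by (rule Sup_upper) simp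

lemma res_le: "mult (res mult y x) x \<le> y"
proof -
  have "mult (res mult y x) x = mult x (Sup {a. mult a x \<le> y})" by (simp add: res_def comm)
  also have "\<dots> = Sup (mult x ` {a. mult a x \<le> y})" by (rule distr)
  also have "\<dots> \<le> y" by (auto intro!: Sup_least simp: comm)
  finally show ?thesis .
qed

lemma le_resD: "a \<le> res mult y x \<Longrightarrow> mult a x \<le> y"
  using mono_left res_le order_trans by metis

lemma res_mono: "y \<le> y' \<Longrightarrow> res mult y x \<le> res mult y' x"
  using le_res res_le order_trans by metis

lemma res_anti: "x \<le> x' \<Longrightarrow> res mult y x' \<le> res mult y x"
  using le_res res_le mono order_trans by metis

lemma max_prime:
  assumes m: "lat_maximal m" and ab: "mult a b \<le> m" and a: "\<not> a \<le> m"
  shows "b \<le> m"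
proof -
  have "sup m a = top"
  proof (rule ccontr)
    assume "sup m a \<noteq> top"
    then have "sup m a = m" using m unfolding lat_maximal_def by auto
    then show False using a by (metis sup.cobounded2)
  qed
  then have "b = sup (mult b m) (mult b a)" by (metis one mult_sup)
  also have "\<dots> \<le> m" using ab mult_le_right comm by (metis le_supI)
  finally show ?thesis .
qed

lemma Inf_not_le:
  fixes m :: 'a
  assumes m: "lat_maximal m" and "finite F" and "\<forall>t\<in>F. \<not> t \<le> m"
  shows "\<not> Inf F \<le> m"
  using assms(2,3)
proof (induction F rule: finite_induct)
  case empty
  then show ?case using m by (simp add: lat_maximal_def top_unique)
next
  case (insert a F)
  have "mult a (Inf F) \<le> inf a (Inf F)" using mult_le_left mult_le_right by simp
  then show ?case using insert max_prime[OF m] by (metis Inf_insert insert_iff order_trans)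
qed

lemma principal_meet:
  assumes "lat_principal mult x" shows "inf y x = mult (res mult y x) x"
proof -
  have "inf y (mult top x) = mult (inf (res mult y x) top) x"
    using assms unfolding lat_principal_def by blast
  then show ?thesis by simp
qed

lemma res_bot: assumes "x \<noteq> bot" shows "res mult bot x = bot"
proof -
  have "a \<le> bot" if "mult a x \<le> bot" for a
    using DOM that assms unfolding lat_domain_def lat_prime_def by (metis bot_unique)
  then show ?thesis unfolding res_def by (simp add: Sup_least bot_unique)
qed

lemma cancel:
  assumes P: "lat_principal mult x" and x: "x \<noteq> bot" and le: "mult a x \<le> mult b x"
  shows "a \<le> b"
proof -
  have "sup b (res mult bot x) = res mult (sup (mult b x) bot) x"
    using P unfolding lat_principal_def by blast
  then have "b = res mult (mult b x) x" using res_bot[OF x] by simp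
  then show ?thesis using le_res[OF le] by simp
qed

lemma compact_sup: "lat_compact a \<Longrightarrow> lat_compact b \<Longrightarrow> lat_compact (sup a b)"
  unfolding lat_compact_def
proof (intro allI impI)
  fix S assume a: "\<forall>S. a \<le> Sup S \<longrightarrow> (\<exists>T\<subseteq>S. finite T \<and> a \<le> Sup T)"
    and b: "\<forall>S. b \<le> Sup S \<longrightarrow> (\<exists>T\<subseteq>S. finite T \<and> b \<le> Sup T)" and ab: "sup a b \<le> Sup S"
  obtain T1 where T1: "T1 \<subseteq> S" "finite T1" "a \<le> Sup T1" using a ab by auto
  obtain T2 where T2: "T2 \<subseteq> S" "finite T2" "b \<le> Sup T2" using b ab by auto
  have "sup a b \<le> Sup (T1 \<union> T2)" using T1 T2 by (simp add: Sup_union_distrib sup.coboundedI1 sup.coboundedI2)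
  moreover have "T1 \<union> T2 \<subseteq> S" "finite (T1 \<union> T2)" using T1 T2 by auto
  ultimately show "\<exists>T\<subseteq>S. finite T \<and> sup a b \<le> Sup T" by (intro exI[of _ "T1 \<union> T2"]) simp
qed

lemma compact_bot: "lat_compact bot"
  unfolding lat_compact_def by auto

lemma compact_Sup_fin: "finite F \<Longrightarrow> \<forall>t\<in>F. lat_compact t \<Longrightarrow> lat_compact (Sup F)"
  by (induction F rule: finite_induct) (auto simp: compact_bot compact_sup)

lemma principal_compact:
  assumes P: "lat_principal mult x" shows "lat_compact x"
proof (cases "x = bot")
  case True then show ?thesis using compact_bot by simp
next
  case False
  show ?thesis unfolding lat_compact_def
  proof (intro allI impI)
    fix S assume xS: "x \<le> Sup S"
    define R where "R = (\<lambda>F. res mult (Sup F) x) ` {F. F \<subseteq> S \<and> finite F}"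
    obtain K where K: "\<forall>k\<in>K. lat_compact k" "x = Sup K" using CL unfolding C_lattice_def by blast
    have kR: "k \<le> mult (Sup R) x" if kK: "k \<in> K" for k
    proof -
      have kx: "k \<le> x" using Sup_upper[OF kK] K(2) by simp
      then have kS: "k \<le> Sup S" using xS by order
      have ck: "lat_compact k" using K(1) kK by blast
      obtain F where F: "F \<subseteq> S" "finite F" "k \<le> Sup F"
        using ck[unfolded lat_compact_def, rule_format, OF kS] by blast
      have "k \<le> inf (Sup F) x" using F kx by simp
      also have "\<dots> = mult (res mult (Sup F) x) x" by (rule principal_meet[OF P])
      also have "\<dots> \<le> mult (Sup R) x"
      proof (rule mono_left, rule Sup_upper)
        show "res mult (Sup F) x \<in> R" using F unfolding R_def by blast
      qed
      finally show ?thesis .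
    qed
    have "Sup K \<le> mult (Sup R) x" by (rule Sup_least) (rule kR)
    then have "x \<le> mult (Sup R) x" by (simp only: K(2)[symmetric])
    then have "mult top x \<le> mult (Sup R) x" by simp
    then have tR: "top \<le> Sup R" by (rule cancel[OF P False])
    have ct: "lat_compact (top::'a)" using CL by (simp add: C_lattice_def)
    obtain R' where R': "R' \<subseteq> R" "finite R'" "top \<le> Sup R'"
      using ct[unfolded lat_compact_def, rule_format, OF tR] by blast
    then obtain Fs where Fs: "Fs \<subseteq> {F. F \<subseteq> S \<and> finite F}" "finite Fs" "R' = (\<lambda>F. res mult (Sup F) x) ` Fs"
      using finite_subset_image[of R' "\<lambda>F. res mult (Sup F) x" "{F. F \<subseteq> S \<and> finite F}"] unfolding R_def by blast
    define G where "G = \<Union>Fs"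
    have G: "G \<subseteq> S" "finite G" using Fs by (auto simp: G_def)
    have "Sup R' \<le> res mult (Sup G) x" unfolding Fs(3)
    proof (rule Sup_least)
      fix r assume "r \<in> (\<lambda>F. res mult (Sup F) x) ` Fs"
      then obtain F where "F \<in> Fs" "r = res mult (Sup F) x" by blast
      then show "r \<le> res mult (Sup G) x" by (auto simp: G_def intro!: res_mono Sup_subset_mono)
    qed
    then have "top \<le> res mult (Sup G) x" using R' by order
    then have "mult top x \<le> Sup G" by (rule le_resD)
    then show "\<exists>T\<subseteq>S. finite T \<and> x \<le> Sup T" using G by auto
  qed
qed

lemma sep:
  fixes a b :: 'a
  assumes a: "lat_maximal a" and b: "lat_maximal b" and ab: "a \<noteq> b"
  shows "\<exists>t. lat_compact t \<and> t \<le> a \<and> \<not> t \<le> b"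
proof (rule ccontr)
  assume no: "\<not> ?thesis"
  obtain S where S: "\<forall>s\<in>S. lat_compact s" "a = Sup S" using CL unfolding C_lattice_def by blast
  have "a \<le> b" unfolding S(2) using no S by (metis Sup_least Sup_upper)
  then show False using a b ab unfolding lat_maximal_def by metis
qed

lemma keyK:
  fixes p m s :: 'a
  assumes PD: "pseudo_Dedekind mult" and PR: "Pruefer mult"
  and p: "lat_principal mult p" "p \<noteq> bot" and m: "lat_maximal m" "p \<le> m"
  and s: "lat_compact s" "s \<le> m"
  shows "\<not> res mult p s \<le> Sup {res mult p t | t. lat_compact t \<and> \<not> t \<le> m}"
proof
  define \<beta> where "\<beta> = res mult p s"
  have bP: "lat_principal mult \<beta>" using PD p unfolding pseudo_Dedekind_def \<beta>_def by blast
  have pb: "p \<le> \<beta>" unfolding \<beta>_def by (rule le_res) (rule mult_le_left)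
  have bnz: "\<beta> \<noteq> bot" using pb p(2) bot_unique by metis
  have bc: "lat_compact \<beta>" by (rule principal_compact[OF bP])
  assume "res mult p s \<le> Sup {res mult p t | t. lat_compact t \<and> \<not> t \<le> m}"
  then obtain T where T: "T \<subseteq> {res mult p t | t. lat_compact t \<and> \<not> t \<le> m}" "finite T" "\<beta> \<le> Sup T"
    using bc unfolding lat_compact_def \<beta>_def by blast
  have "\<forall>r\<in>T. \<exists>t. \<not> t \<le> m \<and> r = res mult p t" using T(1) by blast
  then obtain tf where tf: "\<forall>r\<in>T. \<not> tf r \<le> m \<and> r = res mult p (tf r)" by metis
  define ts where "ts = Inf (tf ` T)"
  have tsm: "\<not> ts \<le> m" unfolding ts_def using Inf_not_le[OF m(1)] T(2) tf by auto
  have "Sup T \<le> res mult p ts"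
  proof (rule Sup_least)
    fix r assume r: "r \<in> T"
    have "ts \<le> tf r" unfolding ts_def using r by (simp add: Inf_lower)
    then show "r \<le> res mult p ts" using tf r res_anti by metis
  qed
  then have "\<beta> \<le> res mult p ts" using T(3) by order
  then have bts: "mult \<beta> ts \<le> p" by (rule le_resD)
  define u where "u = sup p s"
  have uc: "lat_compact u" unfolding u_def by (rule compact_sup[OF principal_compact[OF p(1)] s(1)])
  have uP: "lat_principal mult u" using PR uc unfolding Pruefer_def by blast
  have "res mult p u = \<beta>"
  proof -
    have "mult a u \<le> p \<longleftrightarrow> mult a s \<le> p" for a
    proof -
      have "mult a u = sup (mult a p) (mult a s)" unfolding u_def by (rule mult_sup)
      then show ?thesis using mult_le_right[of a p] comm by (metis le_sup_iff sup.absorb2 sup_commute)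
    qed
    then show ?thesis unfolding res_def \<beta>_def by simp
  qed
  moreover have "inf p u = p" unfolding u_def by simp
  ultimately have "p = mult \<beta> u" using principal_meet[OF uP, of p] by simp
  then have "mult ts \<beta> \<le> mult u \<beta>" using bts comm by metis
  then have "ts \<le> u" by (rule cancel[OF bP bnz])
  moreover have "u \<le> m" unfolding u_def using m s by simp
  ultimately show False using tsm by order
qed

lemma isolate2:
  fixes Z :: "'a set"
  assumes Z: "Z \<subseteq> {m. lat_maximal m}" "m \<in> Z" "infinite Z"
  and fin: "\<forall>m\<in>Z. \<forall>s. lat_compact s \<and> s \<le> m \<longrightarrow> finite {m'\<in>Z. \<not> s \<le> m'}"
  shows "\<exists>g. \<not> g \<le> m \<and> (\<forall>m'\<in>Z. m' \<noteq> m \<longrightarrow> g \<le> m')"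
proof -
  have mm: "lat_maximal m" using Z by auto
  obtain m0 where m0: "m0 \<in> Z" "m0 \<noteq> m"
    using Z(3) by (metis finite.simps infinite_remove insert_Diff_single finite_insert ex_in_conv Diff_iff singletonI)
  obtain t0 where t0: "lat_compact t0" "t0 \<le> m0" "\<not> t0 \<le> m" using sep m0 Z by blast
  define E where "E = {m'\<in>Z. \<not> t0 \<le> m'}"
  have Ef: "finite E" unfolding E_def using fin m0 t0 by blast
  have "\<forall>m'\<in>Z - {m}. \<exists>t. t \<le> m' \<and> \<not> t \<le> m" using sep Z mm by blast
  then obtain tf where tf: "\<forall>m'\<in>Z - {m}. tf m' \<le> m' \<and> \<not> tf m' \<le> m" by metis
  define g where "g = Inf (insert t0 (tf ` (E - {m})))"
  have "\<not> g \<le> m" unfolding g_def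
    apply (rule Inf_not_le[OF mm])
    using Ef apply simp
    using t0 tf by (auto simp: E_def)
  moreover have "g \<le> m'" if "m' \<in> Z" "m' \<noteq> m" for m'
  proof (cases "t0 \<le> m'")
    case True then show ?thesis unfolding g_def by (meson Inf_lower insertI1 order_trans)
  next
    case False
    then have "m' \<in> E - {m}" using that by (auto simp: E_def)
    then have "tf m' \<in> insert t0 (tf ` (E - {m}))" by blast
    then have "g \<le> tf m'" unfolding g_def by (rule Inf_lower)
    then show ?thesis using tf that by (meson DiffI order_trans singletonD)
  qed
  ultimately show ?thesis by blast
qed


theorem main:
  assumes cnt: "countable (UNIV::'a set)"
    and H4: "\<forall>x::'a. \<exists>S. (\<forall>s\<in>S. lat_principal mult s) \<and> x = Sup S"
    and PD: "pseudo_Dedekind mult" and PR: "Pruefer mult"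
  shows "finite_character TYPE('a)"
  unfolding finite_character_def
proof (intro allI impI)
  fix x :: 'a assume x0: "x \<noteq> bot"
  obtain S where S: "\<forall>s\<in>S. lat_principal mult s" "x = Sup S" using H4 by blast
  have "\<exists>p\<in>S. p \<noteq> bot" using x0 S(2) Sup_bot_conv(1)[of S] by blast
  then obtain p where p: "p \<in> S" "p \<noteq> bot" by blast
  have pP: "lat_principal mult p" using S p by blast
  have px: "p \<le> x" using S p by (simp add: Sup_upper)
  define Y where "Y = {m. lat_maximal m \<and> p \<le> m}"
  have sub: "{m. lat_maximal m \<and> x \<le> m} \<subseteq> Y" using px by (auto simp: Y_def)
  have "finite Y"
  proof (rule ccontr)
    assume infY: "infinite Y"
    show False
    proof (cases "\<exists>Z\<subseteq>Y. infinite Z \<and> (\<forall>m\<in>Z. \<forall>s. lat_compact s \<and> s \<le> m \<longrightarrow> finite {m'\<in>Z. \<not> s \<le> m'})")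
      case True
      then obtain Z where Z: "Z \<subseteq> Y" "infinite Z"
        "\<forall>m\<in>Z. \<forall>s. lat_compact s \<and> s \<le> m \<longrightarrow> finite {m'\<in>Z. \<not> s \<le> m'}" by blast
      have ZM: "Z \<subseteq> {m. lat_maximal m}" using Z(1) by (auto simp: Y_def)
      have "\<forall>m\<in>Z. \<exists>g. \<not> g \<le> m \<and> (\<forall>m'\<in>Z. m' \<noteq> m \<longrightarrow> g \<le> m')"
        using isolate2[OF ZM _ Z(2) Z(3)] by blast
      then obtain G where G: "\<forall>m\<in>Z. \<not> G m \<le> m \<and> (\<forall>m'\<in>Z. m' \<noteq> m \<longrightarrow> G m \<le> m')"
        by (rule bchoice[THEN exE])
      obtain f :: "nat \<Rightarrow> 'a" where f: "inj f" "range f \<subseteq> Z"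
        using infinite_countable_subset[OF Z(2)] by blast
      define h where "h S = Sup ((G \<circ> f) ` S)" for S
      have test: "\<forall>S k. (h S \<le> f k) = (k \<notin> S)"
      proof (intro allI)
        fix S k
        show "(h S \<le> f k) = (k \<notin> S)"
        proof
          assume le: "h S \<le> f k"
          show "k \<notin> S"
          proof
            assume "k \<in> S"
            then have "G (f k) \<le> h S" unfolding h_def by (simp add: Sup_upper)
            then have "G (f k) \<le> f k" using le by order
            moreover have "f k \<in> Z" using f by auto
            ultimately show False using G by blast
          qed
        next
          assume kS: "k \<notin> S"
          show "h S \<le> f k" unfolding h_def
          proof (rule Sup_least)
            fix y assume "y \<in> (G \<circ> f) ` S"
            then obtain j where j: "j \<in> S" "y = G (f j)" by auto
            have "f k \<noteq> f j" using kS j f(1) by (metis injD)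
            moreover have "f j \<in> Z" "f k \<in> Z" using f by auto
            ultimately have "G (f j) \<le> f k" using G by blast
            then show "y \<le> f k" using j by simp
          qed
        qed
      qed
      have "inj h" by (rule inj_from_test[OF test])
      then show False using no_inj_nat_set[OF cnt, of h] by simp
    next
      case False
      have step: "\<exists>m\<in>Z. \<exists>s\<in>{s. lat_compact s}. s \<le> m \<and> infinite {m'\<in>Z. \<not> s \<le> m'}"
        if ZY: "Z \<subseteq> Y" "infinite Z" for Z
      proof -
        have "\<not> (\<forall>m\<in>Z. \<forall>s. lat_compact s \<and> s \<le> m \<longrightarrow> finite {m'\<in>Z. \<not> s \<le> m'})"
        proof
          assume "\<forall>m\<in>Z. \<forall>s. lat_compact s \<and> s \<le> m \<longrightarrow> finite {m'\<in>Z. \<not> s \<le> m'}"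
          then have "\<exists>Z\<subseteq>Y. infinite Z \<and> (\<forall>m\<in>Z. \<forall>s. lat_compact s \<and> s \<le> m \<longrightarrow> finite {m'\<in>Z. \<not> s \<le> m'})"
            using ZY by (intro exI[of _ Z]) simp
          then show False using False by (rule notE[rotated])
        qed
        then show ?thesis by auto
      qed
      have "\<exists>(mm::nat \<Rightarrow> 'a) ss. inj mm \<and> range mm \<subseteq> Y \<and> (\<forall>k. ss k \<in> {s. lat_compact s} \<and> ss k \<le> mm k)
            \<and> (\<forall>k j. k < j \<longrightarrow> \<not> ss k \<le> mm j)"
        by (rule greedy[where Y=Y and K="{s. lat_compact s}" and Q="\<lambda>s m. s \<le> m", OF infY step])
      then obtain mm :: "nat \<Rightarrow> 'a" and ss where G: "inj mm" "range mm \<subseteq> Y"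
        "\<forall>k. ss k \<in> {s. lat_compact s} \<and> ss k \<le> mm k" "\<forall>k j. k < j \<longrightarrow> \<not> ss k \<le> mm j"
        by (elim exE conjE)
      have mmY: "lat_maximal (mm k)" "p \<le> mm k" for k using G(2) by (auto simp: Y_def)
      have ex: "\<exists>t. lat_compact t \<and> t \<le> mm k \<and> \<not> t \<le> mm j" if "j \<noteq> k" for k j
      proof -
        have "mm k \<noteq> mm j" using G(1) that by (metis injD)
        then show ?thesis using sep[OF mmY(1)[of k] mmY(1)[of j]] by blast
      qed
      define tt where "tt k j = (SOME t. lat_compact t \<and> t \<le> mm k \<and> \<not> t \<le> mm j)" for k j
      have tt: "lat_compact (tt k j) \<and> tt k j \<le> mm k \<and> \<not> tt k j \<le> mm j" if "j \<noteq> k" for k j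
        unfolding tt_def using someI_ex[OF ex[OF that]] .
      define s' where "s' k = sup (ss k) (Sup (tt k ` {..<k}))" for k
      have s'c: "lat_compact (s' k)" for k
        unfolding s'_def using G(3) tt by (intro compact_sup compact_Sup_fin) auto
      have s'm: "s' k \<le> mm k" for k unfolding s'_def using G(3) tt by (auto intro!: Sup_least)
      have s'n: "\<not> s' k \<le> mm j" if "j \<noteq> k" for k j
      proof (cases "j < k")
        case True
        then have "tt k j \<le> s' k" unfolding s'_def by (auto intro: Sup_upper le_supI2)
        then show ?thesis using tt[OF that] by (meson order_trans)
      next
        case False
        then have "k < j" using that by simp
        then have "\<not> ss k \<le> mm j" using G(4) by blast
        moreover have "ss k \<le> s' k" unfolding s'_def by simp
        ultimately show ?thesis by (meson order_trans)
      qed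
      define h where "h S = Sup ((\<lambda>k. res mult p (s' k)) ` S)" for S
      define \<phi> where "\<phi> k = Sup {res mult p t | t. lat_compact t \<and> \<not> t \<le> mm k}" for k
      have test: "\<forall>S k. (h S \<le> \<phi> k) = (k \<notin> S)"
      proof (intro allI)
        fix S k show "(h S \<le> \<phi> k) = (k \<notin> S)"
        proof
          assume le: "h S \<le> \<phi> k" show "k \<notin> S"
          proof
            assume "k \<in> S"
            then have "res mult p (s' k) \<le> h S" unfolding h_def by (simp add: Sup_upper)
            then have "res mult p (s' k) \<le> \<phi> k" using le by order
            moreover have "\<not> res mult p (s' k) \<le> \<phi> k" unfolding \<phi>_def
              by (rule keyK[OF PD PR pP p(2) mmY(1)[of k] mmY(2)[of k] s'c[of k] s'm[of k]])
            ultimately show False by simp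
          qed
        next
          assume kS: "k \<notin> S"
          show "h S \<le> \<phi> k" unfolding h_def
          proof (rule Sup_least)
            fix y assume "y \<in> (\<lambda>k. res mult p (s' k)) ` S"
            then obtain j where j: "j \<in> S" "y = res mult p (s' j)" by auto
            have "k \<noteq> j" using j kS by auto
            then have "y = res mult p (s' j) \<and> lat_compact (s' j) \<and> \<not> s' j \<le> mm k"
              using j s'c s'n[of k j] by simp
            then have "y \<in> {res mult p t | t. lat_compact t \<and> \<not> t \<le> mm k}" by blast
            then show "y \<le> \<phi> k" unfolding \<phi>_def by (rule Sup_upper)
          qed
        qed
      qed
      have "inj h" by (rule inj_from_test[OF test])
      then show False using no_inj_nat_set[OF cnt, of h] by simp
    qed
  qed
  then show "finite {m. lat_maximal m \<and> x \<le> m}" by (rule finite_subset[OF sub])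
qed

end

theorem proposition3p14:
  fixes mult :: "'a::complete_lattice \<Rightarrow> 'a \<Rightarrow> 'a"
  assumes "countable (UNIV :: 'a set)"
    and "C_lattice mult"
    and "lat_domain mult"
    and "\<forall>x::'a. \<exists>S. (\<forall>s\<in>S. lat_principal mult s) \<and> x = Sup S"
    and "pseudo_Dedekind mult"
    and "Pruefer mult"
  shows "finite_character TYPE('a)"
proof -
  interpret mlat mult by (rule mlat.intro[OF assms(2,3)])
  show ?thesis by (rule main[OF assms(1) assms(4) assms(5) assms(6)])
qed

end
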